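(* Let $\tilde G$ be a disjoint set of pseudo-generators and let $\tilde H\subseteq\tilde G$ consist of $r$ distinct pseudo-generators. Then every operator in the pseudo-product of $\tilde H$ has weight at least $r$.
   Context: $\mathfrak P$ is the group of $N$-qubit Pauli operators modulo phases; $X_k,Z_k$ are the Pauli $X$, $Z$ on qubit $k$; $\mathcal G(T)$ is the set of all products of elements of $T$ (including the identity $I$). The weight of a Pauli operator is its number of non-identity tensor factors. A pseudo-generator is a set of one or two Pauli operators. A set $\tilde G$ of pseudo-generators is disjoint if for every $\tilde g\in\tilde G$ there is a qubit $k$ such that every operator in $\mathcal G(\tilde g)\setminus\{I\}$ anticommutes with $X_k$ or with $Z_k$ (or both), while both $X_k$ and $Z_k$ commute with every operator in $\bigcup_{\tilde g'\in\tilde G\setminus\{\tilde g\}}\mathcal G(\tilde g')$. The pseudo-product of a set of $r$ pseudo-generators $\tilde g_1,\dots,\tilde g_r$ is the set of all products $x_1x_2\cdots x_r$ with $x_j\in\mathcal G(\tilde g_j)\setminus\{I\}$ for each $j$. *)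

theory Defs
  imports Main
begin

text \<open>Single-qubit Pauli operators modulo phases.\<close>
datatype pauli1 = PI | PX | PY | PZ

fun pmul1 :: "pauli1 \<Rightarrow> pauli1 \<Rightarrow> pauli1" where
  "pmul1 PI b = b"
| "pmul1 a PI = a"
| "pmul1 PX PX = PI" | "pmul1 PY PY = PI" | "pmul1 PZ PZ = PI"
| "pmul1 PX PY = PZ" | "pmul1 PY PX = PZ"
| "pmul1 PY PZ = PX" | "pmul1 PZ PY = PX"
| "pmul1 PZ PX = PY" | "pmul1 PX PZ = PY"

definition anticomm1 :: "pauli1 \<Rightarrow> pauli1 \<Rightarrow> bool" where
  "anticomm1 a b \<longleftrightarrow> a \<noteq> PI \<and> b \<noteq> PI \<and> a \<noteq> b"

text \<open>N-qubit Pauli operators modulo phases; the qubits are the elements of a finite type 'q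
  (N = CARD('q)).\<close>
type_synonym 'q pauli = "'q \<Rightarrow> pauli1"

definition pid :: "'q pauli" where "pid = (\<lambda>_. PI)"

definition pmul :: "'q pauli \<Rightarrow> 'q pauli \<Rightarrow> 'q pauli" where
  "pmul P Q = (\<lambda>k. pmul1 (P k) (Q k))"

definition anticommutes :: "'q::finite pauli \<Rightarrow> 'q pauli \<Rightarrow> bool" where
  "anticommutes P Q \<longleftrightarrow> odd (card {k. anticomm1 (P k) (Q k)})"

definition commutes :: "'q::finite pauli \<Rightarrow> 'q pauli \<Rightarrow> bool" where
  "commutes P Q \<longleftrightarrow> \<not> anticommutes P Q"

definition Xop :: "'q \<Rightarrow> 'q pauli" where "Xop k = (\<lambda>j. if j = k then PX else PI)"
definition Zop :: "'q \<Rightarrow> 'q pauli" where "Zop k = (\<lambda>j. if j = k then PZ else PI)"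

definition weight :: "'q::finite pauli \<Rightarrow> nat" where
  "weight P = card {k. P k \<noteq> PI}"

inductive_set gen :: "'q pauli set \<Rightarrow> 'q pauli set" for T where
  gen_id: "pid \<in> gen T"
| gen_mul: "P \<in> gen T \<Longrightarrow> t \<in> T \<Longrightarrow> pmul P t \<in> gen T"

definition pseudo_generator :: "'q pauli set \<Rightarrow> bool" where
  "pseudo_generator g \<longleftrightarrow> card g = 1 \<or> card g = 2"

definition disjoint_pg :: "'q::finite pauli set set \<Rightarrow> bool" where
  "disjoint_pg G \<longleftrightarrow> (\<forall>g\<in>G. \<exists>k.
      (\<forall>P \<in> gen g - {pid}. anticommutes P (Xop k) \<or> anticommutes P (Zop k)) \<and>
      (\<forall>P \<in> (\<Union>g'\<in>G - {g}. gen g'). commutes (Xop k) P \<and> commutes (Zop k) P))"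

definition pseudo_product :: "'q pauli set list \<Rightarrow> 'q pauli set" where
  "pseudo_product hs = {foldr pmul xs pid | xs. list_all2 (\<lambda>x g. x \<in> gen g - {pid}) xs hs}"

end

theory Submission
  imports Defs
begin

lemma anti_X: "anticommutes (P::'q::finite pauli) (Xop k) \<longleftrightarrow> anticomm1 (P k) PX"
proof -
  have "{j. anticomm1 (P j) (Xop k j)} = (if anticomm1 (P k) PX then {k} else {})"
    by (auto simp: Xop_def anticomm1_def)
  then show ?thesis by (simp add: anticommutes_def)
qed

lemma anti_Z: "anticommutes (P::'q::finite pauli) (Zop k) \<longleftrightarrow> anticomm1 (P k) PZ"
proof -
  have "{j. anticomm1 (P j) (Zop k j)} = (if anticomm1 (P k) PZ then {k} else {})"
    by (auto simp: Zop_def anticomm1_def)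
  then show ?thesis by (simp add: anticommutes_def)
qed

lemma anti_X': "anticommutes (Xop k) (P::'q::finite pauli) \<longleftrightarrow> anticomm1 PX (P k)"
proof -
  have "{j. anticomm1 (Xop k j) (P j)} = (if anticomm1 PX (P k) then {k} else {})"
    by (auto simp: Xop_def anticomm1_def)
  then show ?thesis by (simp add: anticommutes_def)
qed

lemma anti_Z': "anticommutes (Zop k) (P::'q::finite pauli) \<longleftrightarrow> anticomm1 PZ (P k)"
proof -
  have "{j. anticomm1 (Zop k j) (P j)} = (if anticomm1 PZ (P k) then {k} else {})"
    by (auto simp: Zop_def anticomm1_def)
  then show ?thesis by (simp add: anticommutes_def)
qed

lemma comm_PI: "commutes (Xop k) (P::'q::finite pauli) \<Longrightarrow> commutes (Zop k) P \<Longrightarrow> P k = PI"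
  by (cases "P k") (auto simp: commutes_def anti_X' anti_Z' anticomm1_def)

lemma anti_nPI: "anticommutes (P::'q::finite pauli) (Xop k) \<or> anticommutes P (Zop k) \<Longrightarrow> P k \<noteq> PI"
  by (auto simp: anti_X anti_Z anticomm1_def)

lemma pmul1_PI2[simp]: "pmul1 a PI = a"
  by (cases a) auto

lemma foldr_at:
  assumes "i < length xs" "\<forall>j<length xs. j \<noteq> i \<longrightarrow> (xs!j) k = PI"
  shows "(foldr pmul xs pid) k = (xs!i) k"
  using assms
proof (induction xs arbitrary: i)
  case Nil then show ?case by simp
next
  case (Cons x xs)
  show ?case
  proof (cases i)
    case 0
    have "(foldr pmul xs pid) k = PI"
    proof -
      have "\<forall>j<length xs. (xs!j) k = PI" using Cons.prems 0 by force
      then show ?thesis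
        by (induction xs) (auto simp: pid_def pmul_def, force)
    qed
    then show ?thesis using 0 by (simp add: pmul_def[of x])
  next
    case (Suc m)
    have hx: "x k = PI" using Cons.prems Suc by force
    have "(foldr pmul xs pid) k = (xs!m) k"
      using Cons.prems Suc by (intro Cons.IH) auto
    then show ?thesis using Suc hx by (simp add: pmul_def[of x])
  qed
qed

theorem lemma12:
  fixes G :: "'q::finite pauli set set" and hs :: "'q pauli set list"
  assumes "\<forall>g\<in>G. pseudo_generator g"
    and "disjoint_pg G"
    and "set hs \<subseteq> G"
    and "distinct hs"
    and "P \<in> pseudo_product hs"
  shows "weight P \<ge> length hs"
proof -
  obtain xs where P: "P = foldr pmul xs pid"
    and la: "list_all2 (\<lambda>x g. x \<in> gen g - {pid}) xs hs"
    using assms(5) unfolding pseudo_product_def by blast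
  have len: "length xs = length hs" using la list_all2_lengthD by blast
  have xin: "\<And>i. i < length hs \<Longrightarrow> xs!i \<in> gen (hs!i) - {pid}"
    using la by (simp add: list_all2_conv_all_nth)
  define Q where "Q g k \<longleftrightarrow>
      (\<forall>P \<in> gen g - {pid}. anticommutes P (Xop k) \<or> anticommutes P (Zop k)) \<and>
      (\<forall>P \<in> (\<Union>g'\<in>G - {g}. gen g'). commutes (Xop k) P \<and> commutes (Zop k) P)" for g k
  define f where "f i = (SOME k. Q (hs!i) k)" for i
  have Qf: "Q (hs!i) (f i)" if "i < length hs" for i
  proof -
    have "hs!i \<in> G" using that assms(3) by auto
    then have "\<exists>k. Q (hs!i) k" using assms(2) unfolding disjoint_pg_def Q_def by blast
    then show ?thesis unfolding f_def by (rule someI_ex)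
  qed
  have own: "(xs!i) (f i) \<noteq> PI" if "i < length hs" for i
    using Qf[OF that] xin[OF that] anti_nPI unfolding Q_def by blast
  have other: "(xs!j) (f i) = PI" if "i < length hs" "j < length hs" "j \<noteq> i" for i j
  proof -
    have "hs!j \<noteq> hs!i" using assms(4) that by (simp add: nth_eq_iff_index_eq)
    moreover have "hs!j \<in> G" using that assms(3) by auto
    ultimately have "xs!j \<in> (\<Union>g'\<in>G - {hs!i}. gen g')" using xin[OF that(2)] by blast
    then show ?thesis using Qf[OF that(1)] comm_PI unfolding Q_def by blast
  qed
  have Pf: "P (f i) \<noteq> PI" if "i < length hs" for i
  proof -
    have "P (f i) = (xs!i) (f i)" unfolding P
      using that other len by (intro foldr_at) auto
    then show ?thesis using own that by simp
  qed
  have inj: "inj_on f {..<length hs}"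
  proof (rule inj_onI)
    fix i j assume i: "i \<in> {..<length hs}" and j: "j \<in> {..<length hs}" and e: "f i = f j"
    show "i = j"
    proof (rule ccontr)
      assume "i \<noteq> j"
      then have "(xs!j) (f i) = PI" using other i j by auto
      then show False using own j e by auto
    qed
  qed
  have "f ` {..<length hs} \<subseteq> {k. P k \<noteq> PI}" using Pf by auto
  then have "card (f ` {..<length hs}) \<le> card {k. P k \<noteq> PI}"
    by (intro card_mono) auto
  then show ?thesis using card_image[OF inj] by (simp add: weight_def)
qed

end
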